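(* Every minimally $1/2$-tough claw-free graph has a vertex of degree $1$.
   Context: All graphs are finite, simple and undirected. A graph is claw-free if it contains no induced subgraph isomorphic to $K_{1,3}$. $\omega(H)$ denotes the number of components of $H$. A cutset of $G$ is a vertex set $S$ with $G-S$ disconnected. For positive real $t$, $G$ is $t$-tough if $\omega(G-S)\le |S|/t$ for every cutset $S$; the toughness $\tau(G)$ is the largest such $t$, with $\tau(K_n)=\infty$ for all $n\ge1$. $G$ is minimally $t$-tough if $\tau(G)=t$ and $\tau(G-e)<t$ for every edge $e$ of $G$. *)

theory Defs
  imports Complex_Main "HOL-Library.Extended_Real"
begin

definition simple_graph :: "'a set \<Rightarrow> 'a set set \<Rightarrow> bool" where
  "simple_graph V E \<longleftrightarrow> finite V \<and>
     (\<forall>e\<in>E. \<exists>u v. e = {u, v} \<and> u \<noteq> v \<and> u \<in> V \<and> v \<in> V)"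

definition degree :: "'a set set \<Rightarrow> 'a \<Rightarrow> nat" where
  "degree E v = card {u. {v, u} \<in> E}"

definition adj_on :: "'a set \<Rightarrow> 'a set set \<Rightarrow> ('a \<times> 'a) set" where
  "adj_on W E = {(u, v). u \<in> W \<and> v \<in> W \<and> {u, v} \<in> E}"

definition num_components :: "'a set \<Rightarrow> 'a set set \<Rightarrow> nat" where
  "num_components W E = card (W // (Id_on W \<union> (adj_on W E)\<^sup>+))"

definition cutset :: "'a set \<Rightarrow> 'a set set \<Rightarrow> 'a set \<Rightarrow> bool" where
  "cutset V E S \<longleftrightarrow> S \<subseteq> V \<and> num_components (V - S) E \<ge> 2"

definition tough :: "'a set \<Rightarrow> 'a set set \<Rightarrow> real \<Rightarrow> bool" where
  "tough V E t \<longleftrightarrow> (\<forall>S. cutset V E S \<longrightarrow>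
      real (num_components (V - S) E) \<le> real (card S) / t)"

text \<open>Toughness: the largest positive t such that G is t-tough (as an extended
  real; \<infinity> for complete graphs, which have no cutsets).\<close>
definition toughness :: "'a set \<Rightarrow> 'a set set \<Rightarrow> ereal" where
  "toughness V E = Sup {ereal t | t. t > 0 \<and> tough V E t}"

definition minimally_tough :: "'a set \<Rightarrow> 'a set set \<Rightarrow> real \<Rightarrow> bool" where
  "minimally_tough V E t \<longleftrightarrow> toughness V E = ereal t \<and>
     (\<forall>e\<in>E. toughness V (E - {e}) < ereal t)"

definition claw_free :: "'a set \<Rightarrow> 'a set set \<Rightarrow> bool" where
  "claw_free V E \<longleftrightarrow> \<not> (\<exists>v a b c. v \<in> V \<and> a \<in> V \<and> b \<in> V \<and> c \<in> V \<and>
      a \<noteq> b \<and> a \<noteq> c \<and> b \<noteq> c \<and>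
      {v, a} \<in> E \<and> {v, b} \<in> E \<and> {v, c} \<in> E \<and>
      {a, b} \<notin> E \<and> {a, c} \<notin> E \<and> {b, c} \<notin> E)"

end

theory Submission
  imports Defs
begin

definition rel :: "'a set \<Rightarrow> 'a set set \<Rightarrow> ('a \<times> 'a) set" where
  "rel W F = Id_on W \<union> (adj_on W F)\<^sup>+"

lemma nc_rel: "num_components W F = card (W // rel W F)"
  by (simp add: num_components_def rel_def)

lemma adj_sub: "adj_on W F \<subseteq> W \<times> W"
  by (auto simp: adj_on_def)

lemma trancl_adj_sub: "(adj_on W F)\<^sup>+ \<subseteq> W \<times> W"
  using trancl_subset_Sigma[OF adj_sub] by blast

lemma rel_sub: "rel W F \<subseteq> W \<times> W"
  using trancl_adj_sub by (auto simp: rel_def)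

lemma sym_adj: "sym (adj_on W F)"
  by (auto simp: sym_def adj_on_def insert_commute)

lemma equiv_rel: "equiv W (rel W F)"
proof (rule equivI)
  show "rel W F \<subseteq> W \<times> W" by (rule rel_sub)
  show "refl_on W (rel W F)" using rel_sub unfolding refl_on_def rel_def by auto
  have s: "sym ((adj_on W F)\<^sup>+)" by (rule sym_trancl[OF sym_adj])
  show "sym (rel W F)" using s unfolding rel_def sym_def by auto
  show "trans (rel W F)" unfolding rel_def trans_def
    using trancl_adj_sub by (auto intro: trancl_trans)
qed

lemma rel_step:
  assumes "(y0, y) \<in> rel W F" "z \<in> W" "{y, z} \<in> F"
  shows "(y0, z) \<in> rel W F"
proof -
  have yW: "y \<in> W" using assms(1) rel_sub by blast
  have a: "(y, z) \<in> adj_on W F" using yW assms by (auto simp: adj_on_def)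
  show ?thesis using assms(1) a unfolding rel_def
    by (auto intro: trancl_into_trancl r_into_trancl)
qed

lemma rel_edge:
  assumes "y \<in> W" "z \<in> W" "{y, z} \<in> F"
  shows "(y, z) \<in> rel W F"
  using rel_step[of y y W F z] assms by (auto simp: rel_def)

lemma rel_mono: "F \<subseteq> F' \<Longrightarrow> rel W F \<subseteq> rel W F'"
proof -
  assume "F \<subseteq> F'"
  then have "adj_on W F \<subseteq> adj_on W F'" by (auto simp: adj_on_def)
  then have "(adj_on W F)\<^sup>+ \<subseteq> (adj_on W F')\<^sup>+" by (rule trancl_mono_subset)
  then show ?thesis unfolding rel_def by blast
qed

lemma path_cut_trancl:
  assumes "(y, z) \<in> (adj_on W F)\<^sup>+"
  shows "(y, z) \<in> rel W (F - {{x, a}}) \<or> (y, x) \<in> rel W (F - {{x, a}})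
       \<or> (y, a) \<in> rel W (F - {{x, a}})"
  using assms
proof (induction rule: trancl_induct)
  case (base z)
  then have yz: "y \<in> W" "z \<in> W" "{y,z} \<in> F" by (auto simp: adj_on_def)
  show ?case
  proof (cases "{y, z} = {x, a}")
    case True
    then have "y = x \<or> y = a" by (auto simp: doubleton_eq_iff)
    then show ?thesis using yz by (auto simp: rel_def)
  next
    case False
    then show ?thesis using rel_edge[of y W z "F - {{x,a}}"] yz by auto
  qed
next
  case (step z w)
  then have zw: "z \<in> W" "w \<in> W" "{z,w} \<in> F" by (auto simp: adj_on_def)
  show ?case
  proof (cases "{z, w} = {x, a}")
    case True
    then have "z = x \<or> z = a" by (auto simp: doubleton_eq_iff)
    then show ?thesis using step.IH by auto
  next
    case False
    then show ?thesis using step.IH rel_step[of y z W "F - {{x,a}}" w] zw by auto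
  qed
qed

lemma path_cut:
  assumes "(y, z) \<in> rel W F"
  shows "(y, z) \<in> rel W (F - {{x, a}}) \<or> (y, x) \<in> rel W (F - {{x, a}})
       \<or> (y, a) \<in> rel W (F - {{x, a}})"
proof -
  have "(y, z) \<in> Id_on W \<or> (y, z) \<in> (adj_on W F)\<^sup>+" using assms by (auto simp: rel_def)
  then show ?thesis
  proof
    assume "(y, z) \<in> Id_on W" then show ?thesis by (auto simp: rel_def)
  qed (rule path_cut_trancl)
qed

lemma crossing_trancl:
  assumes "(y, z) \<in> (adj_on W F)\<^sup>+" "y \<in> A" "z \<notin> A"
  shows "\<exists>p\<in>A. \<exists>q\<in>W - A. {p, q} \<in> F"
  using assms
proof (induction rule: trancl_induct)
  case (base z) then show ?case by (auto simp: adj_on_def)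
next
  case (step z w)
  show ?case
  proof (cases "z \<in> A")
    case True then show ?thesis using step by (auto simp: adj_on_def)
  next
    case False then show ?thesis using step by blast
  qed
qed

lemma card_quotient_le: "finite W \<Longrightarrow> card (W // rel W F) \<le> card W"
proof -
  assume "finite W"
  have "W // rel W F = (\<lambda>y. rel W F `` {y}) ` W" by (auto simp: quotient_def)
  then show ?thesis by (simp add: card_image_le \<open>finite W\<close>)
qed

definition pendant :: "'a set \<Rightarrow> 'a set set \<Rightarrow> 'a set \<Rightarrow> 'a \<Rightarrow> bool" where
  "pendant V E P x \<longleftrightarrow> P \<noteq> {} \<and> P \<subseteq> V \<and> x \<in> V \<and> x \<notin> P \<and>
     (\<forall>p\<in>P. \<forall>q. {p, q} \<in> E \<longrightarrow> q \<in> P \<or> q = x)"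

lemma class_of_mem:
  assumes "D \<in> W // rel W F" "y \<in> D"
  shows "D = rel W F `` {y}"
proof -
  obtain z where z: "D = rel W F `` {z}" "z \<in> W" using assms(1) by (rule quotientE)
  then have "(z, y) \<in> rel W F" using assms(2) by auto
  then show ?thesis using z(1) equiv_class_eq[OF equiv_rel, of z y W F] by simp
qed

locale G =
  fixes V :: "'a set" and E :: "'a set set"
  assumes sg: "simple_graph V E"
    and cf: "claw_free V E"
    and t1: "\<And>S. S \<subseteq> V \<Longrightarrow> 2 \<le> num_components (V - S) E \<Longrightarrow>
                  num_components (V - S) E \<le> 2 * card S"
    and t3: "\<And>e. e \<in> E \<Longrightarrow> \<exists>S. S \<subseteq> V \<and> 2 \<le> num_components (V - S) (E - {e})
                 \<and> 2 * card S < num_components (V - S) (E - {e})"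
begin

lemma finV: "finite V" using sg by (simp add: simple_graph_def)

lemma edgeD:
  assumes "{u, v} \<in> E" shows "u \<in> V" "v \<in> V" "u \<noteq> v"
proof -
  obtain p q where "{u, v} = {p, q}" "p \<noteq> q" "p \<in> V" "q \<in> V"
    using sg assms unfolding simple_graph_def by blast
  then show "u \<in> V" "v \<in> V" "u \<noteq> v" by (auto simp: doubleton_eq_iff)
qed

lemma connected:
  assumes "y \<in> V" "z \<in> V" shows "(y, z) \<in> rel V E"
proof -
  have "num_components V E \<le> 1"
  proof (rule ccontr)
    assume "\<not> num_components V E \<le> 1"
    then have "2 \<le> num_components (V - {}) E" by simp
    then have "num_components (V - {}) E \<le> 2 * card ({}::'a set)"
      by (rule t1[rotated]) simp
    then show False using \<open>\<not> num_components V E \<le> 1\<close> by simp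
  qed
  then have c: "card (V // rel V E) \<le> Suc 0" by (simp add: nc_rel)
  have f: "finite (V // rel V E)" using finite_quotient[OF finV rel_sub] .
  have y: "rel V E `` {y} \<in> V // rel V E" using assms(1) by (rule quotientI)
  have z: "rel V E `` {z} \<in> V // rel V E" using assms(2) by (rule quotientI)
  have all: "\<forall>a1\<in>V // rel V E. \<forall>a2\<in>V // rel V E. a1 = a2"
    using card_le_Suc0_iff_eq[OF f] c by (rule iffD1)
  have "rel V E `` {y} = rel V E `` {z}" using bspec[OF bspec[OF all y] z] .
  then show ?thesis by (rule eq_equiv_class[OF _ equiv_rel assms(2)])
qed

lemma sub_P:
  assumes pen: "pendant V E P x" and F: "F \<subseteq> E" and y0: "y0 \<in> P"
    and nx: "x \<notin> rel W F `` {y0}"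
  shows "rel W F `` {y0} \<subseteq> P"
proof
  fix z assume "z \<in> rel W F `` {y0}"
  then have "(y0, z) \<in> Id_on W \<or> (y0, z) \<in> (adj_on W F)\<^sup>+" by (auto simp: rel_def)
  then show "z \<in> P"
  proof
    assume "(y0, z) \<in> Id_on W" then show ?thesis using y0 by auto
  next
    assume tr: "(y0, z) \<in> (adj_on W F)\<^sup>+"
    then show ?thesis
    proof (induction rule: trancl_induct)
      case (base w)
      then have "{y0, w} \<in> E" using F by (auto simp: adj_on_def)
      then have "w \<in> P \<or> w = x" using pen y0 unfolding pendant_def by blast
      moreover have "w \<in> rel W F `` {y0}" using base by (auto simp: rel_def)
      ultimately show ?case using nx by auto
    next
      case (step w w')
      then have "{w, w'} \<in> E" using F by (auto simp: adj_on_def)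
      then have "w' \<in> P \<or> w' = x" using pen step.IH unfolding pendant_def by blast
      moreover have "(y0, w') \<in> (adj_on W F)\<^sup>+" using step by auto
      then have "w' \<in> rel W F `` {y0}" by (auto simp: rel_def)
      ultimately show ?case using nx by auto
    qed
  qed
qed

lemma lemmaX:
  assumes pen: "pendant V E P x"
    and minP: "\<And>Q y. pendant V E Q y \<Longrightarrow> card P \<le> card Q"
    and aP: "a \<in> P" and only: "\<forall>c\<in>P. {c, x} \<in> E \<longrightarrow> c = a"
    and two: "2 \<le> card P"
  shows False
proof -
  have finP: "finite P" using pen finV unfolding pendant_def by (auto intro: finite_subset)
  have "P - {a} \<noteq> {}"
  proof
    assume "P - {a} = {}" then have "P \<subseteq> {a}" by auto
    then have "card P \<le> 1" using card_mono[of "{a}" P] by simp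
    then show False using two by simp
  qed
  then obtain q where q: "q \<in> P - {a}" by auto
  define W where "W = P - {a}"
  define K where "K = rel W E `` {q}"
  have qK: "q \<in> K" unfolding K_def using q W_def by (auto simp: rel_def)
  have KW: "K \<subseteq> W" unfolding K_def using rel_sub by blast
  have aV: "a \<in> V" using pen aP unfolding pendant_def by auto
  have "pendant V E K a"
    unfolding pendant_def
  proof (intro conjI ballI allI impI)
    show "K \<noteq> {}" using qK by auto
    show "K \<subseteq> V" using KW W_def pen unfolding pendant_def by auto
    show "a \<in> V" by (rule aV)
    show "a \<notin> K" using KW W_def by auto
  next
    fix p r assume pK: "p \<in> K" and e: "{p, r} \<in> E"
    have pP: "p \<in> P" "p \<noteq> a" using pK KW W_def by auto
    then have "r \<in> P \<or> r = x" using pen e unfolding pendant_def by blast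
    moreover have "r \<noteq> x" using only pP e by auto
    ultimately have rP: "r \<in> P" by auto
    show "r \<in> K \<or> r = a"
    proof (cases "r = a")
      case False
      then have "r \<in> W" using rP W_def by auto
      then have "(q, r) \<in> rel W E" using rel_step[of q p W E r] pK e K_def by auto
      then show ?thesis using K_def by auto
    qed simp
  qed
  then have "card P \<le> card K" by (rule minP)
  moreover have "card K < card P"
    using KW W_def aP finP by (intro psubset_card_mono) auto
  ultimately show False by simp
qed

end

context G
begin

lemma not_in_S:
  assumes e: "{x, a} \<in> E" and S: "S \<subseteq> V" "2 \<le> num_components (V - S) (E - {{x, a}})"
    "2 * card S < num_components (V - S) (E - {{x, a}})"
  shows "x \<notin> S"
proof
  assume xS: "x \<in> S"
  have "adj_on (V - S) (E - {{x, a}}) = adj_on (V - S) E"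
  proof
    show "adj_on (V - S) (E - {{x, a}}) \<subseteq> adj_on (V - S) E" by (auto simp: adj_on_def)
    show "adj_on (V - S) E \<subseteq> adj_on (V - S) (E - {{x, a}})"
    proof
      fix p assume "p \<in> adj_on (V - S) E"
      then obtain u v where p: "p = (u, v)" "u \<in> V - S" "v \<in> V - S" "{u, v} \<in> E"
        by (auto simp: adj_on_def)
      have "{u, v} \<noteq> {x, a}"
      proof
        assume "{u, v} = {x, a}"
        then have "x = u \<or> x = v" by (auto simp: doubleton_eq_iff)
        then show False using p xS by auto
      qed
      then show "p \<in> adj_on (V - S) (E - {{x, a}})" using p by (auto simp: adj_on_def)
    qed
  qed
  then have eq: "num_components (V - S) (E - {{x, a}}) = num_components (V - S) E"
    by (simp add: num_components_def)
  have "num_components (V - S) E \<le> 2 * card S"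
    using t1[OF S(1)] S(2) eq by simp
  then show False using S(3) eq by simp
qed

lemma count_bound:
  assumes e: "{x, a} \<in> E" and xW: "x \<in> W" and aW: "a \<in> W" and WV: "W \<subseteq> V"
  shows "card (W // rel W (E - {{x, a}})) \<le> card (W // rel W E)
           + (if (x, a) \<in> rel W (E - {{x, a}}) then 0 else 1)"
proof -
  define R where "R = rel W E"
  define R' where "R' = rel W (E - {{x, a}})"
  have eqR: "equiv W R" unfolding R_def by (rule equiv_rel)
  have eqR': "equiv W R'" unfolding R'_def by (rule equiv_rel)
  have R'R: "R' \<subseteq> R" unfolding R_def R'_def by (rule rel_mono) auto
  have xa: "(x, a) \<in> R" unfolding R_def by (rule rel_edge[OF xW aW e])
  have finW: "finite W" using finV WV by (rule finite_subset[rotated])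
  have sub: "W // R' \<subseteq> {R' `` {x}, R' `` {a}} \<union> (W // R - {R `` {x}})"
  proof
    fix C assume "C \<in> W // R'"
    then obtain y where y: "C = R' `` {y}" "y \<in> W" by (rule quotientE)
    show "C \<in> {R' `` {x}, R' `` {a}} \<union> (W // R - {R `` {x}})"
    proof (cases "(x, y) \<in> R")
      case True
      then have "(y, x) \<in> R" using eqR by (auto elim: equivE simp: sym_def)
      then have "(y, x) \<in> R' \<or> (y, a) \<in> R'"
        using path_cut[of y x W E x a] unfolding R_def R'_def by auto
      then have "C = R' `` {x} \<or> C = R' `` {a}"
        using y equiv_class_eq[OF eqR'] by auto
      then show ?thesis by auto
    next
      case False
      have "R' `` {y} = R `` {y}"
      proof
        show "R' `` {y} \<subseteq> R `` {y}" using R'R by auto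
        show "R `` {y} \<subseteq> R' `` {y}"
        proof
          fix z assume "z \<in> R `` {y}"
          then have yz: "(y, z) \<in> R" by auto
          have yxR: "(y, x) \<notin> R" using False eqR by (auto elim: equivE simp: sym_def)
          have "(y, a) \<notin> R"
          proof
            assume "(y, a) \<in> R"
            moreover have "(a, x) \<in> R" using xa eqR by (auto elim: equivE simp: sym_def)
            ultimately have "(y, x) \<in> R" using eqR by (auto elim: equivE simp: trans_def)
            then show False using yxR by simp
          qed
          then show "z \<in> R' `` {y}"
            using path_cut[of y z W E x a] yz yxR R'R unfolding R_def R'_def by auto
        qed
      qed
      moreover have "R `` {y} \<in> W // R" using y(2) by (rule quotientI)
      moreover have "R `` {y} \<noteq> R `` {x}"
        using False eq_equiv_class[OF _ eqR y(2)] by auto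
      ultimately show ?thesis using y by auto
    qed
  qed
  have fin1: "finite (W // R)" using finite_quotient[OF finW] eqR by (auto elim: equivE)
  have Rx: "R `` {x} \<in> W // R" using xW by (rule quotientI)
  have c1: "card (W // R - {R `` {x}}) = card (W // R) - 1"
    using Rx fin1 by simp
  have pos: "card (W // R) \<ge> 1" using Rx fin1 by (metis One_nat_def Suc_leI card_gt_0_iff empty_iff)
  have c2: "card {R' `` {x}, R' `` {a}} \<le> (if (x, a) \<in> R' then 1 else 2)"
  proof (cases "(x, a) \<in> R'")
    case True
    then have "R' `` {x} = R' `` {a}" using equiv_class_eq[OF eqR'] by simp
    then show ?thesis using True by simp
  next
    case False
    then show ?thesis by (simp add: card_insert_le_m1)
  qed
  have "card (W // R') \<le> card ({R' `` {x}, R' `` {a}} \<union> (W // R - {R `` {x}}))"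
    using sub fin1 by (intro card_mono) auto
  also have "\<dots> \<le> card {R' `` {x}, R' `` {a}} + card (W // R - {R `` {x}})"
    by (rule card_Un_le)
  finally show ?thesis using c1 c2 pos unfolding R_def R'_def by (auto split: if_splits)
qed

end

lemma quot_sub: "D \<in> W // rel W F \<Longrightarrow> D \<subseteq> W"
  using rel_sub by (auto elim!: quotientE)

lemma diff_classes:
  assumes D: "D \<in> W // rel W F" and D': "D' \<in> W // rel W F" and ne: "D \<noteq> D'"
    and y: "y \<in> D" and y': "y' \<in> D'"
  shows "y \<noteq> y'" "{y, y'} \<notin> F"
proof -
  have c: "D = rel W F `` {y}" "D' = rel W F `` {y'}"
    using class_of_mem[OF D y] class_of_mem[OF D' y'] .
  show "y \<noteq> y'" using c ne by auto
  show "{y, y'} \<notin> F"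
  proof
    assume "{y, y'} \<in> F"
    moreover have "y \<in> W" "y' \<in> W" using quot_sub[OF D] quot_sub[OF D'] y y' by auto
    ultimately have "(y, y') \<in> rel W F" by (intro rel_edge)
    then have "rel W F `` {y} = rel W F `` {y'}" by (rule equiv_class_eq[OF equiv_rel])
    then show False using c ne by simp
  qed
qed

context G
begin

lemma claw_le2:
  assumes sV: "s \<in> V" and WV: "W \<subseteq> V"
  shows "card {D \<in> W // rel W E. \<exists>y\<in>D. {s, y} \<in> E} \<le> 2"
proof (rule ccontr)
  let ?T = "{D \<in> W // rel W E. \<exists>y\<in>D. {s, y} \<in> E}"
  assume "\<not> ?thesis"
  then have "3 \<le> card ?T" by simp
  then obtain T where T: "T \<subseteq> ?T" "card T = 3" by (rule obtain_subset_with_card_n)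
  then obtain D1 D2 D3 where D: "T = {D1, D2, D3}" "D1 \<noteq> D2" "D2 \<noteq> D3" "D1 \<noteq> D3"
    by (auto simp: card_3_iff)
  have m: "D1 \<in> ?T" "D2 \<in> ?T" "D3 \<in> ?T" using T(1) D(1) by auto
  obtain y1 where y1: "y1 \<in> D1" "{s, y1} \<in> E" using m(1) by auto
  obtain y2 where y2: "y2 \<in> D2" "{s, y2} \<in> E" using m(2) by auto
  obtain y3 where y3: "y3 \<in> D3" "{s, y3} \<in> E" using m(3) by auto
  have q: "D1 \<in> W // rel W E" "D2 \<in> W // rel W E" "D3 \<in> W // rel W E" using m by auto
  have yV: "y1 \<in> V" "y2 \<in> V" "y3 \<in> V"
    using quot_sub[OF q(1)] quot_sub[OF q(2)] quot_sub[OF q(3)] y1 y2 y3 WV by auto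
  have n12: "y1 \<noteq> y2" "{y1, y2} \<notin> E" using diff_classes[OF q(1) q(2) D(2) y1(1) y2(1)] by auto
  have n23: "y2 \<noteq> y3" "{y2, y3} \<notin> E" using diff_classes[OF q(2) q(3) D(3) y2(1) y3(1)] by auto
  have n13: "y1 \<noteq> y3" "{y1, y3} \<notin> E" using diff_classes[OF q(1) q(3) D(4) y1(1) y3(1)] by auto
  have "\<exists>v a b c. v \<in> V \<and> a \<in> V \<and> b \<in> V \<and> c \<in> V \<and>
      a \<noteq> b \<and> a \<noteq> c \<and> b \<noteq> c \<and>
      {v, a} \<in> E \<and> {v, b} \<in> E \<and> {v, c} \<in> E \<and>
      {a, b} \<notin> E \<and> {a, c} \<notin> E \<and> {b, c} \<notin> E"
    apply (rule exI[of _ s], rule exI[of _ y1], rule exI[of _ y2], rule exI[of _ y3])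
    using sV yV n12 n23 n13 y1(2) y2(2) y3(2) by simp
  then show False using cf unfolding claw_free_def by simp
qed

lemma counting:
  assumes SV: "S \<subseteq> V" and Sne: "S \<noteq> {}"
    and m: "2 * card S \<le> card ((V - S) // rel (V - S) E)"
  shows "\<forall>D\<in>(V - S) // rel (V - S) E. \<forall>s\<in>S. \<forall>s'\<in>S.
            (\<exists>y\<in>D. {s, y} \<in> E) \<longrightarrow> (\<exists>y\<in>D. {s', y} \<in> E) \<longrightarrow> s = s'"
    and "\<forall>s\<in>S. card {D \<in> (V - S) // rel (V - S) E. \<exists>y\<in>D. {s, y} \<in> E} = 2"
proof -
  define W where "W = V - S"
  define Q where "Q = W // rel W E"
  define Tch where "Tch = (\<lambda>s. {D \<in> Q. \<exists>y\<in>D. {s, y} \<in> E})"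
  define T where "T = Sigma S Tch"
  have finS: "finite S" using finV SV by (rule finite_subset[rotated])
  have finW: "finite W" using finV W_def by auto
  have finQ: "finite Q" unfolding Q_def using finite_quotient[OF finW rel_sub] .
  have finT: "\<forall>s\<in>S. finite (Tch s)" using finQ unfolding Tch_def by auto
  have le2: "\<forall>s\<in>S. card (Tch s) \<le> 2"
    using claw_le2 SV unfolding Tch_def Q_def W_def by auto
  have touched: "\<forall>D\<in>Q. \<exists>s\<in>S. D \<in> Tch s"
  proof
    fix D assume DQ: "D \<in> Q"
    then obtain y where y0: "D = rel W E `` {y}" and yW: "y \<in> W" unfolding Q_def by (rule quotientE)
    have y: "y \<in> D" using y0 yW by (auto simp: rel_def)
    obtain v where v: "v \<in> S" using Sne by auto
    have "(y, v) \<in> rel V E" using connected yW v SV W_def by auto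
    moreover have "y \<noteq> v" using yW v W_def by auto
    ultimately have "(y, v) \<in> (adj_on V E)\<^sup>+" by (auto simp: rel_def)
    moreover have "v \<notin> D" using quot_sub[of D W E] DQ v W_def unfolding Q_def by auto
    ultimately have "\<exists>p\<in>D. \<exists>q\<in>V - D. {p, q} \<in> E"
      using crossing_trancl[of y v V E D] y by simp
    then obtain p q where pq: "p \<in> D" "q \<in> V - D" "{p, q} \<in> E" by auto
    have DC: "D = rel W E `` {p}" using class_of_mem[of D W E p] DQ pq(1) unfolding Q_def by simp
    have "q \<notin> W"
    proof
      assume "q \<in> W"
      moreover have "p \<in> W" using quot_sub DQ pq(1) unfolding Q_def by blast
      ultimately have "(p, q) \<in> rel W E" using pq(3) by (intro rel_edge)
      then show False using pq(2) DC by auto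
    qed
    then have "q \<in> S" using pq(2) W_def by auto
    moreover have "{q, p} \<in> E" using pq(3) by (simp add: insert_commute)
    ultimately show "\<exists>s\<in>S. D \<in> Tch s" using DQ pq(1) unfolding Tch_def by blast
  qed
  have cardT: "card T = (\<Sum>s\<in>S. card (Tch s))" unfolding T_def using finS finT by simp
  have sumle: "(\<Sum>s\<in>S. card (Tch s)) \<le> (\<Sum>s\<in>S. 2)" using le2 by (intro sum_mono) auto
  have img: "snd ` T = Q"
  proof
    show "snd ` T \<subseteq> Q" unfolding T_def Tch_def by auto
    show "Q \<subseteq> snd ` T"
    proof
      fix D assume "D \<in> Q"
      then obtain s where "s \<in> S" "D \<in> Tch s" using touched by blast
      then have "(s, D) \<in> T" unfolding T_def by auto
      then show "D \<in> snd ` T" by force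
    qed
  qed
  have finTT: "finite T" unfolding T_def using finS finT by auto
  have "card Q \<le> card T" using img card_image_le[OF finTT, of snd] by simp
  moreover have "card Q \<ge> 2 * card S" using m unfolding Q_def W_def .
  ultimately have eqs: "card T = card Q" "(\<Sum>s\<in>S. card (Tch s)) = (\<Sum>s\<in>S. 2)"
    using cardT sumle by auto
  have inj: "inj_on snd T" using eq_card_imp_inj_on[OF finTT, of snd] img eqs(1) by simp
  show "\<forall>D\<in>(V - S) // rel (V - S) E. \<forall>s\<in>S. \<forall>s'\<in>S.
            (\<exists>y\<in>D. {s, y} \<in> E) \<longrightarrow> (\<exists>y\<in>D. {s', y} \<in> E) \<longrightarrow> s = s'"
  proof (intro ballI impI)
    fix D s s' assume DQ: "D \<in> (V - S) // rel (V - S) E" and s: "s \<in> S" "s' \<in> S"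
      and t: "\<exists>y\<in>D. {s, y} \<in> E" "\<exists>y\<in>D. {s', y} \<in> E"
    have i1: "(s, D) \<in> T" "(s', D) \<in> T" using DQ s t unfolding T_def Tch_def Q_def W_def by auto
    have "(s, D) = (s', D)" using inj_onD[OF inj _ i1] by simp
    then show "s = s'" by simp
  qed
  show "\<forall>s\<in>S. card {D \<in> (V - S) // rel (V - S) E. \<exists>y\<in>D. {s, y} \<in> E} = 2"
  proof
    fix s0 assume s0: "s0 \<in> S"
    have "card (Tch s0) = 2"
    proof (rule ccontr)
      assume "card (Tch s0) \<noteq> 2"
      then have "card (Tch s0) < 2" using le2 s0 by force
      then have "(\<Sum>s\<in>S. card (Tch s)) < (\<Sum>s\<in>S. (2::nat))"
        using le2 s0 finS by (intro sum_strict_mono_ex1) auto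
      then show False using eqs(2) by simp
    qed
    then show "card {D \<in> (V - S) // rel (V - S) E. \<exists>y\<in>D. {s0, y} \<in> E} = 2"
      unfolding Tch_def Q_def W_def .
  qed
qed

end

context G
begin

lemma edge_analysis:
  assumes e: "{x, a} \<in> E" and SV: "S \<subseteq> V"
    and k2: "2 \<le> num_components (V - S) (E - {{x, a}})"
    and kS: "2 * card S < num_components (V - S) (E - {{x, a}})"
  defines "Ca \<equiv> rel (V - S) (E - {{x, a}}) `` {a}"
  shows "x \<notin> S \<and> x \<notin> Ca \<and>
   ((pendant V E Ca x \<and> (\<forall>c\<in>Ca. {c, x} \<in> E \<longrightarrow> c = a))
    \<or> (\<exists>s0\<in>S. (\<exists>c\<in>Ca. {c, s0} \<in> E) \<and> (\<exists>y\<in>V - S. {s0, y} \<in> E \<and>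
         pendant V E (rel (V - S) E `` {y}) s0 \<and> a \<notin> rel (V - S) E `` {y}
         \<and> x \<notin> rel (V - S) E `` {y})))"
proof -
  define W where "W = V - S"
  define R where "R = rel W E"
  define R' where "R' = rel W (E - {{x, a}})"
  have Ca: "Ca = R' `` {a}" unfolding Ca_def R'_def W_def ..
  have eqR: "equiv W R" unfolding R_def by (rule equiv_rel)
  have eqR': "equiv W R'" unfolding R'_def by (rule equiv_rel)
  have R'R: "R' \<subseteq> R" unfolding R_def R'_def by (rule rel_mono) auto
  have xS: "x \<notin> S" by (rule not_in_S[OF e SV k2 kS])
  have ee: "{a, x} = {x, a}" by (rule insert_commute)
  have aS: "a \<notin> S" using not_in_S[of a x S] e SV k2 kS ee by simp
  have xV: "x \<in> V" "a \<in> V" using edgeD[OF e] by auto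
  have xW: "x \<in> W" "a \<in> W" using xV xS aS W_def by auto
  have xa: "(x, a) \<in> R" unfolding R_def by (rule rel_edge[OF xW e])
  have kb: "num_components W (E - {{x, a}}) \<le> num_components W E + (if (x, a) \<in> R' then 0 else 1)"
    using count_bound[OF e xW] W_def unfolding nc_rel R'_def by auto
  have kgt: "num_components W E < num_components W (E - {{x, a}})"
  proof (cases "2 \<le> num_components W E")
    case True
    then have "num_components W E \<le> 2 * card S" using t1[OF SV] W_def by simp
    then show ?thesis using kS W_def by simp
  next
    case False then show ?thesis using k2 W_def by simp
  qed
  have nxa: "(x, a) \<notin> R'" using kb kgt by (auto split: if_splits)
  have xCa: "x \<notin> Ca"
  proof
    assume "x \<in> Ca"
    then have "(a, x) \<in> R'" using Ca by simp
    then have "(x, a) \<in> R'" using eqR' by (auto elim: equivE simp: sym_def)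
    then show False using nxa by simp
  qed
  have aCa: "a \<in> Ca" using Ca xW(2) unfolding R'_def by (auto simp: rel_def)
  have CaW: "Ca \<subseteq> W" using Ca R'_def rel_sub by blast
  show ?thesis
  proof (cases "\<exists>c\<in>Ca. \<exists>s\<in>S. {c, s} \<in> E")
    case False
    have pen: "pendant V E Ca x"
      unfolding pendant_def
    proof (intro conjI ballI allI impI)
      show "Ca \<noteq> {}" using aCa by auto
      show "Ca \<subseteq> V" using CaW W_def by auto
      show "x \<in> V" by (rule xV(1))
      show "x \<notin> Ca" by (rule xCa)
    next
      fix p q assume pC: "p \<in> Ca" and pq: "{p, q} \<in> E"
      have "q \<in> V" using edgeD[OF pq] by simp
      moreover have "q \<notin> S" using False pC pq by auto
      ultimately have qW: "q \<in> W" using W_def by simp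
      show "q \<in> Ca \<or> q = x"
      proof (cases "{p, q} = {x, a}")
        case True
        then have "(p = x \<and> q = a) \<or> (p = a \<and> q = x)" by (auto simp: doubleton_eq_iff)
        then show ?thesis using pC xCa by auto
      next
        case F: False
        have ap: "(a, p) \<in> rel W (E - {{x, a}})" using pC Ca R'_def by simp
        have pq': "{p, q} \<in> E - {{x, a}}" using pq F by simp
        have "(a, q) \<in> R'" unfolding R'_def by (rule rel_step[OF ap qW pq'])
        then show ?thesis using Ca by simp
      qed
    qed
    have only: "\<forall>c\<in>Ca. {c, x} \<in> E \<longrightarrow> c = a"
    proof (intro ballI impI)
      fix c assume cC: "c \<in> Ca" and cx: "{c, x} \<in> E"
      show "c = a"
      proof (rule ccontr)
        assume "c \<noteq> a"
        then have "{c, x} \<noteq> {x, a}" by (auto simp: doubleton_eq_iff)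
        then have cx': "{c, x} \<in> E - {{x, a}}" using cx by simp
        have ac: "(a, c) \<in> rel W (E - {{x, a}})" using cC Ca R'_def by simp
        have "(a, x) \<in> R'" unfolding R'_def by (rule rel_step[OF ac xW(1) cx'])
        then show False using xCa Ca by simp
      qed
    qed
    show ?thesis using xS xCa pen only by blast
  next
    case True
    then obtain c s0 where cs: "c \<in> Ca" "s0 \<in> S" "{c, s0} \<in> E" by blast
    have Sne: "S \<noteq> {}" using cs by auto
    have mge: "2 * card S \<le> card ((V - S) // rel (V - S) E)"
    proof -
      have "num_components W (E - {{x, a}}) \<le> num_components W E + 1" using kb nxa by simp
      then show ?thesis using kS W_def by (simp add: nc_rel)
    qed
    note cnt = counting[OF SV Sne mge]
    have Dx: "R `` {x} \<in> W // R" using xW(1) by (rule quotientI)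
    have CaDx: "Ca \<subseteq> R `` {x}"
    proof
      fix z assume "z \<in> Ca"
      then have "(a, z) \<in> R" using Ca R'R by auto
      then have "(x, z) \<in> R" using xa eqR by (auto elim: equivE simp: trans_def)
      then show "z \<in> R `` {x}" by simp
    qed
    have s0c: "{s0, c} \<in> E" using cs(3) by (simp add: insert_commute)
    let ?T = "{D \<in> W // R. \<exists>y\<in>D. {s0, y} \<in> E}"
    have DxT: "R `` {x} \<in> ?T" using Dx CaDx cs(1) s0c by blast
    have "card ?T = 2" using cnt(2) cs(2) unfolding W_def R_def by simp
    then obtain p q where pq: "?T = {p, q}" "p \<noteq> q" by (auto simp: card_2_iff)
    have "\<exists>D'. D' \<in> ?T \<and> D' \<noteq> R `` {x}"
    proof (cases "p = R `` {x}")
      case True then show ?thesis using pq by (intro exI[of _ q]) auto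
    next
      case False then show ?thesis using pq by (intro exI[of _ p]) auto
    qed
    then obtain D' where D': "D' \<in> ?T" "D' \<noteq> R `` {x}" by blast
    then obtain y where y: "y \<in> D'" "{s0, y} \<in> E" "D' \<in> W // R" by blast
    have D'eq: "D' = R `` {y}" using class_of_mem[of D' W E y] y R_def by simp
    have yW: "y \<in> W" using quot_sub[of D' W E] y R_def by auto
    have s0V: "s0 \<in> V" using SV cs(2) by auto
    have pen: "pendant V E D' s0"
      unfolding pendant_def
    proof (intro conjI ballI allI impI)
      show "D' \<noteq> {}" using y by auto
      show "D' \<subseteq> V" using quot_sub[of D' W E] y R_def W_def by auto
      show "s0 \<in> V" by (rule s0V)
      show "s0 \<notin> D'" using quot_sub[of D' W E] y R_def W_def cs(2) by auto
    next
      fix p q assume pD: "p \<in> D'" and pq: "{p, q} \<in> E"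
      have "q \<in> V" using edgeD[OF pq] by simp
      show "q \<in> D' \<or> q = s0"
      proof (cases "q \<in> S")
        case True
        have "{q, p} \<in> E" using pq by (simp add: insert_commute)
        then have "q = s0" using cnt(1) y(3) pD True cs(2) y(1,2) unfolding W_def R_def by blast
        then show ?thesis by simp
      next
        case False
        then have "q \<in> W" using \<open>q \<in> V\<close> W_def by simp
        moreover have "(y, p) \<in> rel W E" using pD D'eq R_def by simp
        ultimately have "(y, q) \<in> R" unfolding R_def using rel_step pq by metis
        then show ?thesis using D'eq by simp
      qed
    qed
    have aD: "a \<notin> D'"
    proof
      assume "a \<in> D'"
      then have "D' = R `` {a}" using class_of_mem[of D' W E a] y R_def by simp
      also have "\<dots> = R `` {x}" using equiv_class_eq[OF eqR xa] by simp
      finally show False using D'(2) by simp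
    qed
    have xD: "x \<notin> D'"
    proof
      assume "x \<in> D'"
      then have "D' = R `` {x}" using class_of_mem[of D' W E x] y R_def by simp
      then show False using D'(2) by simp
    qed
    have "\<exists>y\<in>V - S. {s0, y} \<in> E \<and> pendant V E (rel (V - S) E `` {y}) s0 \<and>
          a \<notin> rel (V - S) E `` {y} \<and> x \<notin> rel (V - S) E `` {y}"
      using yW y(2) pen aD xD D'eq unfolding W_def R_def by auto
    then show ?thesis using xS xCa cs by blast
  qed
qed

end

context G
begin

lemma edge_cases:
  assumes e: "{x, a} \<in> E" and SV: "S \<subseteq> V"
    and k2: "2 \<le> num_components (V - S) (E - {{x, a}})"
    and kS: "2 * card S < num_components (V - S) (E - {{x, a}})"
  obtains "x \<notin> S" "x \<notin> rel (V - S) (E - {{x, a}}) `` {a}"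
      "pendant V E (rel (V - S) (E - {{x, a}}) `` {a}) x"
      "\<forall>c\<in>rel (V - S) (E - {{x, a}}) `` {a}. {c, x} \<in> E \<longrightarrow> c = a"
  | s0 c y where "x \<notin> S" "x \<notin> rel (V - S) (E - {{x, a}}) `` {a}"
      "s0 \<in> S" "c \<in> rel (V - S) (E - {{x, a}}) `` {a}" "{c, s0} \<in> E"
      "y \<in> V - S" "{s0, y} \<in> E"
      "pendant V E (rel (V - S) E `` {y}) s0" "a \<notin> rel (V - S) E `` {y}"
      "x \<notin> rel (V - S) E `` {y}"
proof -
  note ea = edge_analysis[OF e SV k2 kS]
  have c1: "x \<notin> S" using ea by (rule conjunct1)
  have c2: "x \<notin> rel (V - S) (E - {{x, a}}) `` {a}" using ea by (rule conjunct1[OF conjunct2])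
  note d = conjunct2[OF conjunct2[OF ea]]
  show ?thesis
    using d
  proof (elim disjE conjE bexE)
    assume h: "pendant V E (rel (V - S) (E - {{x, a}}) `` {a}) x"
      "\<forall>c\<in>rel (V - S) (E - {{x, a}}) `` {a}. {c, x} \<in> E \<longrightarrow> c = a"
    show ?thesis by (rule that(1)[OF c1 c2 h])
  next
    fix s0 c y assume h: "s0 \<in> S" "c \<in> rel (V - S) (E - {{x, a}}) `` {a}" "{c, s0} \<in> E"
      "y \<in> V - S" "{s0, y} \<in> E"
      "pendant V E (rel (V - S) E `` {y}) s0" "a \<notin> rel (V - S) E `` {y}"
      "x \<notin> rel (V - S) E `` {y}"
    show ?thesis by (rule that(2)[OF c1 c2 h])
  qed
qed

lemma exists_pendant:
  assumes En: "E \<noteq> {}" shows "\<exists>Q y. pendant V E Q y"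
proof -
  obtain e where e: "e \<in> E" using En by auto
  have "\<exists>u w. e = {u, w} \<and> u \<noteq> w \<and> u \<in> V \<and> w \<in> V" using sg e unfolding simple_graph_def by simp
  then obtain u w where uw: "e = {u, w}" by blast
  obtain S where S: "S \<subseteq> V" "2 \<le> num_components (V - S) (E - {e})"
    "2 * card S < num_components (V - S) (E - {e})" using t3[OF e] by blast
  have "{u, w} \<in> E" using e uw by simp
  then show ?thesis
    by (rule edge_cases[OF _ S(1) S(2)[unfolded uw] S(3)[unfolded uw]]) (rule exI, rule exI, assumption)+
qed

lemma main_loc:
  assumes En: "E \<noteq> {}" shows "\<exists>v\<in>V. degree E v = 1"
proof -
  obtain Q0 y0 where "pendant V E Q0 y0" using exists_pendant[OF En] by blast
  then have "(\<lambda>(Q, y). pendant V E Q y) (Q0, y0)" by simp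
  from ex_has_least_nat[of "\<lambda>(Q, y). pendant V E Q y", OF this, of "\<lambda>(Q, y). card Q"]
  obtain Px where "(\<lambda>(Q, y). pendant V E Q y) Px"
    "\<forall>Qy. (\<lambda>(Q, y). pendant V E Q y) Qy \<longrightarrow> (\<lambda>(Q, y). card Q) Px \<le> (\<lambda>(Q, y). card Q) Qy"
    by blast
  then obtain P x where pen: "pendant V E P x"
    and minP: "\<And>Q y. pendant V E Q y \<Longrightarrow> card P \<le> card Q"
    by (cases Px) force
  have PV: "P \<subseteq> V" "P \<noteq> {}" "x \<in> V" "x \<notin> P" using pen unfolding pendant_def by auto
  have PN: "\<And>p q. p \<in> P \<Longrightarrow> {p, q} \<in> E \<Longrightarrow> q \<in> P \<or> q = x"
    using pen unfolding pendant_def by blast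
  have finP: "finite P" using PV(1) finV by (rule finite_subset)
  obtain p where p: "p \<in> P" using PV(2) by auto
  have "(p, x) \<in> rel V E" using connected PV p by auto
  moreover have "p \<noteq> x" using p PV by auto
  ultimately have "(p, x) \<in> (adj_on V E)\<^sup>+" by (auto simp: rel_def)
  then have "\<exists>a\<in>P. \<exists>q\<in>V - P. {a, q} \<in> E" using crossing_trancl[of p x V E P] p PV(4) by simp
  then obtain a q where aq: "a \<in> P" "q \<in> V - P" "{a, q} \<in> E" by blast
  have "q = x" using PN[OF aq(1) aq(3)] aq(2) by auto
  then have ax: "{a, x} \<in> E" using aq by simp
  show ?thesis
  proof (cases "card P = 1")
    case True
    then have P1: "P = {a}" using aq(1) by (auto simp: card_1_singleton_iff)
    have "{u. {a, u} \<in> E} = {x}"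
    proof
      show "{u. {a, u} \<in> E} \<subseteq> {x}"
      proof
        fix u assume "u \<in> {u. {a, u} \<in> E}"
        then have au: "{a, u} \<in> E" by simp
        then have "u \<in> P \<or> u = x" using PN aq(1) by blast
        moreover have "u \<noteq> a" using edgeD[OF au] by simp
        ultimately show "u \<in> {x}" using P1 by auto
      qed
      show "{x} \<subseteq> {u. {a, u} \<in> E}" using ax by simp
    qed
    then have "degree E a = 1" by (simp add: degree_def)
    then show ?thesis using aq(1) PV(1) by blast
  next
    case False
    have "card P \<noteq> 0" using PV(2) finP by simp
    then have two: "2 \<le> card P" using False by linarith
    have xa: "{x, a} \<in> E" using ax by (simp add: insert_commute)
    obtain S where S: "S \<subseteq> V" "2 \<le> num_components (V - S) (E - {{x, a}})"
      "2 * card S < num_components (V - S) (E - {{x, a}})" using t3[OF xa] by blast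
    define Ca where "Ca = rel (V - S) (E - {{x, a}}) `` {a}"
    show ?thesis
    proof (rule edge_cases[OF xa S])
      assume xS: "x \<notin> S" and xCa: "x \<notin> rel (V - S) (E - {{x, a}}) `` {a}"
        and pC: "pendant V E (rel (V - S) (E - {{x, a}}) `` {a}) x"
        and onl: "\<forall>c\<in>rel (V - S) (E - {{x, a}}) `` {a}. {c, x} \<in> E \<longrightarrow> c = a"
      have CaP: "Ca \<subseteq> P" unfolding Ca_def
        by (rule sub_P[OF pen _ aq(1)]) (use xCa in auto)
      have "card P \<le> card Ca" using minP pC Ca_def by simp
      moreover have "card Ca \<le> card P" by (rule card_mono[OF finP CaP])
      ultimately have "card Ca = card P" by (rule le_antisym[rotated])
      then have "Ca = P" by (rule card_subset_eq[OF finP CaP])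
      then have "\<forall>c\<in>P. {c, x} \<in> E \<longrightarrow> c = a" using onl Ca_def by simp
      then have False using lemmaX[OF pen minP aq(1) _ two] by simp
      then show ?thesis ..
    next
      fix s0 c y
      assume xS: "x \<notin> S" and xCa: "x \<notin> rel (V - S) (E - {{x, a}}) `` {a}"
        and B: "s0 \<in> S" "c \<in> rel (V - S) (E - {{x, a}}) `` {a}" "{c, s0} \<in> E"
        "y \<in> V - S" "{s0, y} \<in> E"
        "pendant V E (rel (V - S) E `` {y}) s0" "a \<notin> rel (V - S) E `` {y}"
        "x \<notin> rel (V - S) E `` {y}"
      have CaP: "Ca \<subseteq> P" unfolding Ca_def
        by (rule sub_P[OF pen _ aq(1)]) (use xCa in auto)
      define D where "D = rel (V - S) E `` {y}"
      have "c \<in> P" using B(2) CaP Ca_def by auto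
      then have "s0 \<in> P \<or> s0 = x" using PN B(3) by simp
      then have s0P: "s0 \<in> P" using B(1) xS by auto
      have yD: "y \<in> D" using B(4) unfolding D_def by (auto simp: rel_def)
      have "y \<in> P \<or> y = x" using PN[OF s0P B(5)] .
      then have yP: "y \<in> P" using yD B(8) D_def by auto
      have DP: "D \<subseteq> P" unfolding D_def
        by (rule sub_P[OF pen _ yP]) (use B(8) in auto)
      have "D \<noteq> P" using aq(1) B(7) D_def by auto
      then have "card D < card P" using DP finP by (intro psubset_card_mono) auto
      moreover have "card P \<le> card D" using minP B(6) D_def by simp
      ultimately show ?thesis by simp
    qed
  qed
qed

end

theorem mainTheorem13:
  fixes V :: "'a set" and E :: "'a set set"
  assumes "simple_graph V E"
    and "claw_free V E"
    and "minimally_tough V E (1/2)"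
  shows "\<exists>v\<in>V. degree E v = 1"
proof -
  have tg: "toughness V E = ereal (1/2)" and mt: "\<forall>e\<in>E. toughness V (E - {e}) < ereal (1/2)"
    using assms(3) unfolding minimally_tough_def by auto
  have t1: "num_components (V - S) E \<le> 2 * card S"
    if SV: "S \<subseteq> V" and m2: "2 \<le> num_components (V - S) E" for S
  proof (rule ccontr)
    assume "\<not> ?thesis"
    then have gt: "2 * card S < num_components (V - S) E" by simp
    define m where "m = num_components (V - S) E"
    have mpos: "real m > 0" using m2 m_def by simp
    have cut: "cutset V E S" using SV m2 by (simp add: cutset_def)
    have "toughness V E \<le> ereal (real (card S) / real m)"
      unfolding toughness_def
    proof (rule Sup_least)
      fix z assume "z \<in> {ereal t |t. t > 0 \<and> tough V E t}"
      then obtain t where t: "z = ereal t" "t > 0" "tough V E t" by blast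
      have "real m \<le> real (card S) / t" using t(3) cut m_def unfolding tough_def by blast
      then have "real m * t \<le> real (card S)" using t(2) by (simp add: le_divide_eq)
      then have "t \<le> real (card S) / real m" using mpos
        by (simp add: pos_le_divide_eq mult.commute)
      then show "z \<le> ereal (real (card S) / real m)" using t(1) by simp
    qed
    moreover have "real (card S) / real m < 1/2"
      using gt mpos m_def by (simp add: divide_less_eq)
    ultimately show False using tg by simp
  qed
  have t3: "\<exists>S. S \<subseteq> V \<and> 2 \<le> num_components (V - S) (E - {e})
                 \<and> 2 * card S < num_components (V - S) (E - {e})" if e: "e \<in> E" for e
  proof (rule ccontr)
    assume na: "\<not> ?thesis"
    have "tough V (E - {e}) (1/2)"
      unfolding tough_def
    proof (intro allI impI)
      fix S assume "cutset V (E - {e}) S"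
      then have "num_components (V - S) (E - {e}) \<le> 2 * card S"
        using na unfolding cutset_def by (meson not_le)
      then show "real (num_components (V - S) (E - {e})) \<le> real (card S) / (1/2)"
        by simp
    qed
    then have "ereal (1/2) \<in> {ereal t |t. t > 0 \<and> tough V (E - {e}) t}" by force
    then have "ereal (1/2) \<le> toughness V (E - {e})"
      unfolding toughness_def by (rule Sup_upper)
    then show False using mt e by (simp add: not_le[symmetric])
  qed
  interpret G V E using assms(1,2) t1 t3 by unfold_locales auto
  have En: "E \<noteq> {}"
  proof
    assume E0: "E = {}"
    have "\<forall>y\<in>V. \<forall>z\<in>V. y = z"
    proof (intro ballI)
      fix y z assume "y \<in> V" "z \<in> V"
      then have "(y, z) \<in> rel V E" by (rule connected)
      then show "y = z" using E0 by (auto simp: rel_def adj_on_def)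
    qed
    then have cV: "card V \<le> 1" using card_le_Suc0_iff_eq[OF finV] by simp
    have "tough V E 1"
      unfolding tough_def
    proof (intro allI impI)
      fix S assume "cutset V E S"
      then have c2: "2 \<le> num_components (V - S) E" by (simp add: cutset_def)
      have "num_components (V - S) E \<le> card (V - S)"
        unfolding nc_rel using finV by (intro card_quotient_le) auto
      also have "\<dots> \<le> card V" using finV by (intro card_mono) auto
      finally show "real (num_components (V - S) E) \<le> real (card S) / 1" using c2 cV by simp
    qed
    then have "ereal 1 \<in> {ereal t |t. t > 0 \<and> tough V E t}" by force
    then have "ereal 1 \<le> toughness V E"
      unfolding toughness_def by (rule Sup_upper)
    then show False using tg by simp
  qed
  show ?thesis by (rule main_loc[OF En])
qed

end
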